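(* Let $f\not\equiv0$ be given by a Taylor series $f(z)=\sum_{k\ge0}a_kz^k$ with radius of convergence $R\in(0,\infty]$, and let $a_{n_0}$ be its first non-zero coefficient. Then for every $n>n_0$, $\kappa(n,r)\to\infty$ as $r\to0$; but $\kappa(n_0,r)\to1$ as $r\to 0$.
   Context: For $0<r<R$, $M_1(r)=\frac{1}{2\pi}\int_0^{2\pi}|f(re^{i\theta})|\,d\theta$ and $\kappa(n,r)=\dfrac{M_1(r)}{|a_n|r^n}$, with the convention $\kappa(n,r)=+\infty$ if $a_n=0$. *)

theory Defs
  imports "HOL-Analysis.Analysis"
begin

definition taylor_fun :: "(nat \<Rightarrow> complex) \<Rightarrow> complex \<Rightarrow> complex" where
  "taylor_fun a z = (\<Sum>k. a k * z ^ k)"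

definition M1 :: "(complex \<Rightarrow> complex) \<Rightarrow> real \<Rightarrow> real" where
  "M1 f r = integral {0..2*pi} (\<lambda>\<theta>. cmod (f (complex_of_real r * cis \<theta>))) / (2*pi)"

definition kappa :: "(nat \<Rightarrow> complex) \<Rightarrow> nat \<Rightarrow> real \<Rightarrow> ereal" where
  "kappa a n r = (if a n = 0 then \<infinity>
     else ereal (M1 (taylor_fun a) r / (cmod (a n) * r ^ n)))"

end

theory Submission
  imports Defs
begin

lemma main_limit:
  fixes a :: "nat \<Rightarrow> complex" and n0 :: nat
  assumes R: "conv_radius a > 0"
    and z: "\<forall>k<n0. a k = 0"
  shows "((\<lambda>r. M1 (taylor_fun a) r / r ^ n0) \<longlongrightarrow> cmod (a n0)) (at_right (0::real))"
proof -
  define b where "b = (\<lambda>k. a (k + n0))"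
  define g where "g = (\<lambda>z::complex. \<Sum>k. b k * z ^ k)"
  have cb: "conv_radius b = conv_radius a" unfolding b_def by (rule conv_radius_shift)
  obtain \<rho> :: real where rho: "0 < ereal \<rho>" "ereal \<rho> < conv_radius a"
    using ereal_dense2[OF R] by blast
  have rho0: "\<rho> > 0" using rho by simp
  have gcont: "continuous_on (cball 0 \<rho>) g"
    using powser_continuous_suminf[of \<rho> b 0] rho cb unfolding g_def by simp
  have g0: "g 0 = a n0" unfolding g_def b_def by simp
  have fact: "taylor_fun a w = w ^ n0 * g w" if "norm w \<le> \<rho>" for w
  proof -
    have "ereal (norm w) < conv_radius b" using that rho cb
      by (metis ereal_less_eq(3) order.strict_trans1)
    then have "summable (\<lambda>k. b k * w ^ k)" by (rule summable_in_conv_radius)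
    then have "(\<lambda>k. b k * w ^ k) sums g w" unfolding g_def by (rule summable_sums)
    then have "(\<lambda>k. b k * w ^ k * w ^ n0) sums (g w * w ^ n0)" by (rule sums_mult2)
    then have "(\<lambda>k. a (k + n0) * w ^ (k + n0)) sums (g w * w ^ n0)"
      unfolding b_def by (simp add: power_add mult.assoc)
    then have "(\<lambda>k. a k * w ^ k) sums (g w * w ^ n0 + (\<Sum>i<n0. a i * w ^ i))"
      using sums_iff_shift[of "\<lambda>k. a k * w ^ k" n0] by simp
    moreover have "(\<Sum>i<n0. a i * w ^ i) = 0" using z by simp
    ultimately have "(\<lambda>k. a k * w ^ k) sums (g w * w ^ n0)" by simp
    then show ?thesis unfolding taylor_fun_def by (simp add: sums_iff mult.commute)
  qed
  define G where "G = (\<lambda>r::real. integral {0..2*pi} (\<lambda>\<theta>. cmod (g (complex_of_real r * cis \<theta>))) / (2*pi))"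
  have intg: "(\<lambda>\<theta>. cmod (g (complex_of_real r * cis \<theta>))) integrable_on {0..2*pi}"
    if "0 < r" "r \<le> \<rho>" for r
  proof -
    have "continuous_on {0..2*pi} (\<lambda>\<theta>. complex_of_real r * cis \<theta>)"
      by (intro continuous_intros)
    moreover have "(\<lambda>\<theta>. complex_of_real r * cis \<theta>) ` {0..2*pi} \<subseteq> cball 0 \<rho>"
      using that by (auto simp: norm_mult)
    ultimately have "continuous_on {0..2*pi} (\<lambda>\<theta>. g (complex_of_real r * cis \<theta>))"
      using continuous_on_compose2[OF gcont] by blast
    then have "continuous_on {0..2*pi} (\<lambda>\<theta>. cmod (g (complex_of_real r * cis \<theta>)))"
      by (intro continuous_intros)
    then show ?thesis by (rule integrable_continuous_real)
  qed
  have ev: "eventually (\<lambda>r. G r = M1 (taylor_fun a) r / r ^ n0) (at_right 0)"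
  proof -
    have "eventually (\<lambda>r::real. 0 < r \<and> r < \<rho>) (at_right 0)"
      using eventually_at_right_real[OF rho0] by simp
    then show ?thesis
    proof (rule eventually_mono)
      fix r :: real assume r: "0 < r \<and> r < \<rho>"
      have "\<And>\<theta>. cmod (taylor_fun a (complex_of_real r * cis \<theta>))
                = r ^ n0 * cmod (g (complex_of_real r * cis \<theta>))"
        using r by (subst fact) (auto simp: norm_mult norm_power)
      then have "M1 (taylor_fun a) r = r ^ n0 * G r"
        unfolding M1_def G_def by simp
      then show "G r = M1 (taylor_fun a) r / r ^ n0" using r by simp
    qed
  qed
  have "(G \<longlongrightarrow> cmod (a n0)) (at_right 0)"
  proof (rule tendstoI)
    fix e :: real assume e: "e > 0"
    obtain d where d: "d > 0" "\<forall>x'\<in>cball 0 \<rho>. dist x' 0 < d \<longrightarrow> dist (g x') (g 0) < e/2"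
      using gcont[unfolded continuous_on_iff] e rho0
      by (metis centre_in_cball half_gt_zero less_eq_real_def)
    have "eventually (\<lambda>r::real. 0 < r \<and> r < min d \<rho>) (at_right 0)"
      using eventually_at_right_real[of 0 "min d \<rho>"] d rho0 by simp
    then show "eventually (\<lambda>r. dist (G r) (cmod (a n0)) < e) (at_right 0)"
    proof (rule eventually_mono)
      fix r :: real assume r: "0 < r \<and> r < min d \<rho>"
      let ?h = "\<lambda>\<theta>. cmod (g (complex_of_real r * cis \<theta>))"
      have pt: "\<bar>?h \<theta> - cmod (a n0)\<bar> \<le> e/2" for \<theta>
      proof -
        have "dist (g (complex_of_real r * cis \<theta>)) (g 0) < e/2"
          using d(2) r by (auto simp: norm_mult dist_norm)
        then show ?thesis using g0 norm_triangle_ineq3[of "g (complex_of_real r * cis \<theta>)" "a n0"]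
          by (simp add: dist_norm)
      qed
      have pt1: "?h \<theta> \<le> cmod (a n0) + e/2" for \<theta> using pt[of \<theta>] by linarith
      have pt2: "cmod (a n0) - e/2 \<le> ?h \<theta>" for \<theta> using pt[of \<theta>] by linarith
      have I: "?h integrable_on {0..2*pi}" using intg r by simp
      have up: "integral {0..2*pi} ?h \<le> integral {0..2*pi} (\<lambda>\<theta>. cmod (a n0) + e/2)"
        by (rule integral_le[OF I]) (use pt1 in \<open>simp_all add: integrable_const_ivl\<close>)
      have lo: "integral {0..2*pi} (\<lambda>\<theta>. cmod (a n0) - e/2) \<le> integral {0..2*pi} ?h"
        by (rule integral_le[OF _ I]) (use pt2 in \<open>simp_all add: integrable_const_ivl\<close>)
      have up': "integral {0..2*pi} ?h \<le> 2*pi * (cmod (a n0) + e/2)" using up by simp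
      have lo': "2*pi * (cmod (a n0) - e/2) \<le> integral {0..2*pi} ?h" using lo by simp
      have "G r \<le> cmod (a n0) + e/2" unfolding G_def using up'
        by (simp add: divide_le_eq mult.commute)
      moreover have "cmod (a n0) - e/2 \<le> G r" unfolding G_def using lo'
        by (simp add: le_divide_eq mult.commute)
      ultimately show "dist (G r) (cmod (a n0)) < e" using e by (simp add: dist_real_def abs_less_iff)
    qed
  qed
  then show ?thesis using ev by (rule Lim_transform_eventually)
qed

theorem theorem4p3:
  fixes a :: "nat \<Rightarrow> complex" and n0 :: nat
  assumes "conv_radius a > 0"
    and "a n0 \<noteq> 0"
    and "\<forall>k<n0. a k = 0"
  shows "(\<forall>n>n0. ((\<lambda>r. kappa a n r) \<longlongrightarrow> \<infinity>) (at_right (0::real)))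
       \<and> ((\<lambda>r. kappa a n0 r) \<longlongrightarrow> 1) (at_right (0::real))"
proof -
  let ?c = "cmod (a n0)"
  have c0: "?c > 0" using assms(2) by simp
  have L: "((\<lambda>r. M1 (taylor_fun a) r / r ^ n0) \<longlongrightarrow> ?c) (at_right (0::real))"
    by (rule main_limit[OF assms(1) assms(3)])
  have pos: "eventually (\<lambda>r::real. 0 < r) (at_right 0)"
    by (simp add: eventually_at_right_less)
  have A: "((\<lambda>r. kappa a n r) \<longlongrightarrow> \<infinity>) (at_right (0::real))" if n: "n > n0" for n
  proof (cases "a n = 0")
    case True
    then show ?thesis by (simp add: kappa_def)
  next
    case False
    let ?d = "cmod (a n)"
    have d0: "?d > 0" using False by simp
    have L2: "((\<lambda>r. M1 (taylor_fun a) r / r ^ n0 / ?d) \<longlongrightarrow> ?c / ?d) (at_right (0::real))"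
      by (intro tendsto_intros L) (use d0 in simp)
    have t0: "((\<lambda>r::real. r ^ (n - n0)) \<longlongrightarrow> 0) (at_right 0)"
    proof -
      have "((\<lambda>r::real. r ^ (n - n0)) \<longlongrightarrow> 0 ^ (n - n0)) (at_right 0)"
        by (intro tendsto_intros)
      then show ?thesis using n by simp
    qed
    have inf: "LIM r at_right (0::real). inverse (r ^ (n - n0)) :> at_top"
      by (rule filterlim_inverse_at_top[OF t0]) (use pos in \<open>auto elim: eventually_mono\<close>)
    have "LIM r at_right (0::real). (M1 (taylor_fun a) r / r ^ n0 / ?d) * inverse (r ^ (n - n0)) :> at_top"
      by (rule filterlim_tendsto_pos_mult_at_top[OF L2 _ inf]) (use c0 d0 in simp)
    moreover have "eventually (\<lambda>r. (M1 (taylor_fun a) r / r ^ n0 / ?d) * inverse (r ^ (n - n0))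
        = M1 (taylor_fun a) r / (?d * r ^ n)) (at_right (0::real))"
      using pos
    proof (rule eventually_mono)
      fix r :: real assume r: "0 < r"
      have "r ^ n = r ^ n0 * r ^ (n - n0)" using n by (simp flip: power_add)
      then show "(M1 (taylor_fun a) r / r ^ n0 / ?d) * inverse (r ^ (n - n0))
        = M1 (taylor_fun a) r / (?d * r ^ n)" by (simp add: field_simps)
    qed
    ultimately have "LIM r at_right (0::real). M1 (taylor_fun a) r / (?d * r ^ n) :> at_top"
      using filterlim_cong[OF refl refl, of "\<lambda>r. (M1 (taylor_fun a) r / r ^ n0 / ?d) * inverse (r ^ (n - n0))"
         "\<lambda>r. M1 (taylor_fun a) r / (?d * r ^ n)" "at_right (0::real)" at_top] by simp
    then show ?thesis using False by (simp add: kappa_def tendsto_PInfty_eq_at_top)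
  qed
  have "((\<lambda>r. M1 (taylor_fun a) r / r ^ n0 / ?c) \<longlongrightarrow> ?c / ?c) (at_right (0::real))"
    by (intro tendsto_intros L) (use c0 in simp)
  then have "((\<lambda>r. ereal (M1 (taylor_fun a) r / r ^ n0 / ?c)) \<longlongrightarrow> ereal 1) (at_right (0::real))"
    using c0 by (intro tendsto_ereal) simp
  then have B: "((\<lambda>r. kappa a n0 r) \<longlongrightarrow> 1) (at_right (0::real))"
    using assms(2) by (simp add: kappa_def one_ereal_def field_simps mult.commute)
  show ?thesis using A B by blast
qed

end
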